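(* Let $G=(V,E)$ be a graph with maximum degree $\Delta$ and let $W\subseteq V$ be such that the induced subgraph $\langle W\rangle$ is connected. Then for every equivalence class $\varphi$ of $\mathfrak d_{|S_v}(W)^*$ and every vertex $x\in W$ there is an edge $(x,y)\in\varphi$ with $(x,y)\in E\big(\bigcup_{v\in W}S_v\big)$. Moreover, $\mathfrak d_{|S_v}(W)^*$ has at most $\Delta$ equivalence classes.
   Context: All graphs are finite, simple and undirected. For a graph $G=(V,E)$ and $v\in V$, $E_v$ denotes the set of edges incident to $v$. For two distinct adjacent edges $e=(v,u)$, $f=(v,w)$, a square spanned by $e$ and $f$ is a $4$-cycle $v,u,x,w,v$ with $x\notin\{v,u,w\}$; it is chordless if neither $(u,w)$ nor $(v,x)$ is an edge of $G$. In a chordless square $v,u,x,w$, $(x,w)$ is the opposite edge of $(v,u)$ and $(x,u)$ is the opposite edge of $(v,w)$ (and vice versa). The relation $\delta(G)\subseteq E\times E$: $(e,f)\in\delta(G)$ iff (i) $e,f$ are distinct adjacent edges and it is not the case that $e$ and $f$ span exactly one square and that square is chordless; or (ii) $e,f$ are opposite edges of a chordless square; or (iii) $e=f$. For a relation $R$, $R^*$ is its transitive closure (finest equivalence relation containing $R$). Define $\mathfrak d_v=((E_v\times E)\cup(E\times E_v))\cap\delta(G)$ and $\mathfrak d_v^*$ the finest equivalence relation on $E$ containing $\mathfrak d_v$. Let $F_v\subseteq E\setminus E_v$ be the set of edges that are the edges not incident to $v$ of some chordless square spanned by two edges $e,e'\in E_v$ with $(e,e')\notin\mathfrak d_v^*$.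 The partial star product $S_v$ is the subgraph of $G$ with edge set $E_v\cup F_v$ and vertex set the endpoints of these edges. Define $\mathfrak d_{|S_v}=\{(e,f)\in\mathfrak d_v^*: e,f\in E(S_v)\}$ (an equivalence relation on $E(S_v)$), $\mathfrak d_{|S_v}(W)=\bigcup_{v\in W}\mathfrak d_{|S_v}$, and $\mathfrak d_{|S_v}(W)^*$ its transitive closure, an equivalence relation on $\bigcup_{v\in W}E(S_v)$. *)

theory Defs
  imports Main
begin

definition simple_graph :: "'a set \<Rightarrow> 'a set set \<Rightarrow> bool" where
  "simple_graph V E \<longleftrightarrow> finite V \<and> (\<forall>e\<in>E. \<exists>u v. e = {u, v} \<and> u \<noteq> v \<and> u \<in> V \<and> v \<in> V)"

definition inc_edges :: "'a set set \<Rightarrow> 'a \<Rightarrow> 'a set set" where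
  "inc_edges E v = {e \<in> E. v \<in> e}"

definition degree :: "'a set set \<Rightarrow> 'a \<Rightarrow> nat" where
  "degree E v = card (inc_edges E v)"

definition max_degree :: "'a set \<Rightarrow> 'a set set \<Rightarrow> nat" where
  "max_degree V E = (if V = {} then 0 else Max (degree E ` V))"

definition induced_connected :: "'a set set \<Rightarrow> 'a set \<Rightarrow> bool" where
  "induced_connected E W \<longleftrightarrow>
     (\<forall>a\<in>W. \<forall>b\<in>W. (a, b) \<in> {(x, y). x \<in> W \<and> y \<in> W \<and> {x, y} \<in> E}\<^sup>*)"

definition adj_edges :: "'a set set \<Rightarrow> 'a set \<Rightarrow> 'a set \<Rightarrow> bool" where
  "adj_edges E e f \<longleftrightarrow> e \<in> E \<and> f \<in> E \<and> e \<noteq> f \<and> e \<inter> f \<noteq> {}"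

definition sq_corners :: "'a set set \<Rightarrow> 'a \<Rightarrow> 'a \<Rightarrow> 'a \<Rightarrow> 'a set" where
  "sq_corners E v u w = {x. x \<notin> {v, u, w} \<and> {u, x} \<in> E \<and> {x, w} \<in> E}"

definition unique_chordless_square :: "'a set set \<Rightarrow> 'a set \<Rightarrow> 'a set \<Rightarrow> bool" where
  "unique_chordless_square E e f \<longleftrightarrow>
     (\<exists>v u w x. e = {v, u} \<and> f = {v, w} \<and> u \<noteq> v \<and> w \<noteq> v \<and> u \<noteq> w \<and>
        sq_corners E v u w = {x} \<and> {u, w} \<notin> E \<and> {v, x} \<notin> E)"

definition opposite_edges :: "'a set set \<Rightarrow> 'a set \<Rightarrow> 'a set \<Rightarrow> bool" where
  "opposite_edges E e f \<longleftrightarrow>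
     (\<exists>a b c d. distinct [a, b, c, d] \<and> {a, b} \<in> E \<and> {b, c} \<in> E \<and> {c, d} \<in> E \<and> {d, a} \<in> E \<and>
        {a, c} \<notin> E \<and> {b, d} \<notin> E \<and> e = {a, b} \<and> f = {c, d})"

definition delta :: "'a set set \<Rightarrow> ('a set \<times> 'a set) set" where
  "delta E = {(e, f). e \<in> E \<and> f \<in> E \<and>
      ((adj_edges E e f \<and> \<not> unique_chordless_square E e f) \<or> opposite_edges E e f \<or> e = f)}"

(* finest equivalence relation on A containing R (for R \<subseteq> A \<times> A) *)
definition equiv_closure :: "'b set \<Rightarrow> ('b \<times> 'b) set \<Rightarrow> ('b \<times> 'b) set" where
  "equiv_closure A R = Id_on A \<union> (R \<union> R\<inverse>)\<^sup>+"

definition dv :: "'a set set \<Rightarrow> 'a \<Rightarrow> ('a set \<times> 'a set) set" where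
  "dv E v = ((inc_edges E v \<times> E) \<union> (E \<times> inc_edges E v)) \<inter> delta E"

definition dv_star :: "'a set set \<Rightarrow> 'a \<Rightarrow> ('a set \<times> 'a set) set" where
  "dv_star E v = equiv_closure E (dv E v)"

definition F_v :: "'a set set \<Rightarrow> 'a \<Rightarrow> 'a set set" where
  "F_v E v = {g. \<exists>u w x. {v, u} \<in> E \<and> {v, w} \<in> E \<and> u \<noteq> v \<and> w \<noteq> v \<and> u \<noteq> w \<and>
       x \<notin> {v, u, w} \<and> {u, x} \<in> E \<and> {x, w} \<in> E \<and> {u, w} \<notin> E \<and> {v, x} \<notin> E \<and>
       ({v, u}, {v, w}) \<notin> dv_star E v \<and> (g = {u, x} \<or> g = {x, w})}"

definition S_edges :: "'a set set \<Rightarrow> 'a \<Rightarrow> 'a set set" where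
  "S_edges E v = inc_edges E v \<union> F_v E v"

definition d_restr :: "'a set set \<Rightarrow> 'a \<Rightarrow> ('a set \<times> 'a set) set" where
  "d_restr E v = dv_star E v \<inter> (S_edges E v \<times> S_edges E v)"

definition d_W :: "'a set set \<Rightarrow> 'a set \<Rightarrow> ('a set \<times> 'a set) set" where
  "d_W E W = (\<Union>v\<in>W. d_restr E v)"

definition d_W_star :: "'a set set \<Rightarrow> 'a set \<Rightarrow> ('a set \<times> 'a set) set" where
  "d_W_star E W = (d_W E W)\<^sup>+"

end

theory Submission
  imports Defs
begin

lemma edge_form:
  assumes "simple_graph V E" "e \<in> E"
  shows "\<exists>u v. e = {u, v} \<and> u \<noteq> v \<and> u \<in> V \<and> v \<in> V"
  using assms unfolding simple_graph_def by blast

lemma edge_neq: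
  assumes "simple_graph V E" "{x, y} \<in> E"
  shows "x \<noteq> y"
proof
  assume "x = y"
  then obtain u v where "{x} = {u, v}" "u \<noteq> v" using edge_form[OF assms] by auto
  then show False by (metis doubleton_eq_iff insert_absorb2)
qed

lemma S_sub_E: "S_edges E v \<subseteq> E"
  unfolding S_edges_def inc_edges_def F_v_def by auto

lemma dv_star_sym: "(a, b) \<in> dv_star E v \<Longrightarrow> (b, a) \<in> dv_star E v"
proof -
  assume h: "(a, b) \<in> dv_star E v"
  have s: "sym (dv E v \<union> (dv E v)\<inverse>)" by (auto simp: sym_def)
  show ?thesis using h sym_trancl[OF s] unfolding dv_star_def equiv_closure_def
    by (auto simp: sym_def)
qed

lemma dv_in_star: "(a, b) \<in> dv E v \<Longrightarrow> (a, b) \<in> dv_star E v"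
  unfolding dv_star_def equiv_closure_def by auto

lemma opp_dv:
  assumes "distinct [v, b, c, d]" "{v, b} \<in> E" "{b, c} \<in> E" "{c, d} \<in> E" "{d, v} \<in> E"
    "{v, c} \<notin> E" "{b, d} \<notin> E"
  shows "({v, b}, {c, d}) \<in> dv E v"
proof -
  have "opposite_edges E {v, b} {c, d}"
    unfolding opposite_edges_def using assms by blast
  then show ?thesis using assms unfolding dv_def delta_def inc_edges_def by auto
qed

lemma base_step:
  assumes sg: "simple_graph V E" and g: "g \<in> S_edges E v"
  shows "\<exists>y. {v, y} \<in> S_edges E v \<and> (g, {v, y}) \<in> d_restr E v"
proof (cases "g \<in> inc_edges E v")
  case True
  then have gE: "g \<in> E" "v \<in> g" unfolding inc_edges_def by auto
  then obtain a b where ab: "g = {a, b}" using edge_form[OF sg] by blast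
  then obtain y where "g = {v, y}" using gE by auto
  moreover have "(g, g) \<in> dv_star E v" using gE unfolding dv_star_def equiv_closure_def by auto
  ultimately show ?thesis using g unfolding d_restr_def by auto
next
  case False
  then have "g \<in> F_v E v" using g unfolding S_edges_def by auto
  then obtain u w x where h: "{v, u} \<in> E" "{v, w} \<in> E" "u \<noteq> v" "w \<noteq> v" "u \<noteq> w"
       "x \<notin> {v, u, w}" "{u, x} \<in> E" "{x, w} \<in> E" "{u, w} \<notin> E" "{v, x} \<notin> E"
       "g = {u, x} \<or> g = {x, w}" unfolding F_v_def by blast
  show ?thesis
  proof (cases "g = {u, x}")
    case True
    have "({v, w}, {x, u}) \<in> dv E v"
    proof (rule opp_dv)
      show "distinct [v, w, x, u]" using h by auto
      show "{v, w} \<in> E" by fact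
      show "{w, x} \<in> E" using h(8) by (simp add: insert_commute)
      show "{x, u} \<in> E" using h(7) by (simp add: insert_commute)
      show "{u, v} \<in> E" using h(1) by (simp add: insert_commute)
      show "{v, x} \<notin> E" by fact
      show "{w, u} \<notin> E" using h(9) by (simp add: insert_commute)
    qed
    then have "({v, w}, g) \<in> dv_star E v" using True dv_in_star by (metis insert_commute)
    then have "(g, {v, w}) \<in> dv_star E v" by (rule dv_star_sym)
    moreover have "{v, w} \<in> S_edges E v" using h unfolding S_edges_def inc_edges_def by auto
    ultimately show ?thesis using g unfolding d_restr_def by auto
  next
    case False
    then have gx: "g = {x, w}" using h by auto
    have "({v, u}, {x, w}) \<in> dv E v"
    proof (rule opp_dv)
      show "distinct [v, u, x, w]" using h by auto
      show "{v, u} \<in> E" by fact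
      show "{u, x} \<in> E" by fact
      show "{x, w} \<in> E" by fact
      show "{w, v} \<in> E" using h(2) by (simp add: insert_commute)
      show "{v, x} \<notin> E" by fact
      show "{u, w} \<notin> E" by fact
    qed
    then have "({v, u}, g) \<in> dv_star E v" using gx dv_in_star by metis
    then have "(g, {v, u}) \<in> dv_star E v" by (rule dv_star_sym)
    moreover have "{v, u} \<in> S_edges E v" using h unfolding S_edges_def inc_edges_def by auto
    ultimately show ?thesis using g unfolding d_restr_def by auto
  qed
qed

lemma move_step:
  assumes sg: "simple_graph V E" and e1: "{x, y} \<in> E" and e2: "{x, z} \<in> E" and yz: "y \<noteq> z"
  shows "\<exists>y'. {z, y'} \<in> S_edges E x \<and> ({x, y}, {z, y'}) \<in> d_restr E x"
proof -
  have xy: "x \<noteq> y" using edge_neq[OF sg e1] .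
  have xz: "x \<noteq> z" using edge_neq[OF sg e2] .
  have S1: "{x, y} \<in> S_edges E x" using e1 unfolding S_edges_def inc_edges_def by auto
  have S2: "{z, x} \<in> S_edges E x" using e2 unfolding S_edges_def inc_edges_def by (auto simp: insert_commute)
  show ?thesis
  proof (cases "({x, y}, {x, z}) \<in> dv_star E x")
    case True
    then show ?thesis using S1 S2 unfolding d_restr_def by (auto simp: insert_commute)
  next
    case False
    then have nd: "({x, y}, {x, z}) \<notin> delta E"
      using dv_in_star[of "{x,y}" "{x,z}" E x] e1 e2 unfolding dv_def inc_edges_def by auto
    have ne: "{x, y} \<noteq> {x, z}" using yz xy xz by (auto simp: doubleton_eq_iff)
    have "adj_edges E {x, y} {x, z}" unfolding adj_edges_def using e1 e2 ne by auto
    then have "unique_chordless_square E {x, y} {x, z}" using nd e1 e2 ne unfolding delta_def by auto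
    then obtain v u w c where h: "{x, y} = {v, u}" "{x, z} = {v, w}" "u \<noteq> v" "w \<noteq> v" "u \<noteq> w"
        "sq_corners E v u w = {c}" "{u, w} \<notin> E" "{v, c} \<notin> E"
      unfolding unique_chordless_square_def by blast
    have vx: "v = x \<and> u = y \<and> w = z" using h(1,2,5) yz xy xz by (auto simp: doubleton_eq_iff)
    have c: "c \<notin> {x, y, z}" "{y, c} \<in> E" "{c, z} \<in> E" "{y, z} \<notin> E" "{x, c} \<notin> E"
      using h(6,7,8) vx unfolding sq_corners_def by auto
    have F: "{c, z} \<in> F_v E x"
      unfolding F_v_def using e1 e2 xy xz yz c False by blast
    have "({x, y}, {c, z}) \<in> dv E x"
    proof (rule opp_dv)
      show "distinct [x, y, c, z]" using c xy xz yz by auto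
      show "{x, y} \<in> E" by fact
      show "{y, c} \<in> E" by fact
      show "{c, z} \<in> E" by fact
      show "{z, x} \<in> E" using e2 by (simp add: insert_commute)
      show "{x, c} \<notin> E" by fact
      show "{y, z} \<notin> E" by fact
    qed
    then have "({x, y}, {c, z}) \<in> dv_star E x" by (rule dv_in_star)
    moreover have "{z, c} \<in> S_edges E x" using F unfolding S_edges_def by (auto simp: insert_commute)
    ultimately show ?thesis using S1 unfolding d_restr_def by (auto simp: insert_commute)
  qed
qed

theorem lemma3p5:
  fixes V :: "'a set" and E :: "'a set set" and W :: "'a set" and \<Delta> :: nat
  assumes "simple_graph V E"
    and "\<Delta> = max_degree V E"
    and "W \<subseteq> V"
    and "induced_connected E W"
  shows "(\<forall>\<phi> \<in> (\<Union>v\<in>W. S_edges E v) // d_W_star E W. \<forall>x\<in>W.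
            \<exists>y. {x, y} \<in> \<phi> \<and> {x, y} \<in> (\<Union>v\<in>W. S_edges E v))
         \<and> card ((\<Union>v\<in>W. S_edges E v) // d_W_star E W) \<le> \<Delta>"
proof -
  define A where "A = (\<Union>v\<in>W. S_edges E v)"
  define r where "r = d_W_star E W"
  have sg: "simple_graph V E" by fact
  have AE: "A \<subseteq> E" unfolding A_def by (rule UN_least) (rule S_sub_E)
  have finV: "finite V" using sg unfolding simple_graph_def by simp
  have EP: "E \<subseteq> Pow V"
  proof
    fix e assume "e \<in> E"
    then obtain u w where "e = {u, w}" "u \<in> V" "w \<in> V" using edge_form[OF sg] by blast
    then show "e \<in> Pow V" by auto
  qed
  have finE: "finite E" using finite_subset[OF EP] finV by simp
  have dWsub: "d_W E W \<subseteq> A \<times> A" unfolding d_W_def d_restr_def A_def by blast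
  have dWrefl: "\<And>a. a \<in> A \<Longrightarrow> (a, a) \<in> d_W E W"
  proof -
    fix a assume "a \<in> A"
    then obtain v where v: "v \<in> W" "a \<in> S_edges E v" unfolding A_def by (rule UN_E)
    have "a \<in> E" using S_sub_E v(2) by (rule subsetD)
    then have "(a, a) \<in> dv_star E v" unfolding dv_star_def equiv_closure_def by (simp add: Id_on_iff)
    then have "(a, a) \<in> d_restr E v" unfolding d_restr_def using v(2) by simp
    then show "(a, a) \<in> d_W E W" unfolding d_W_def by (rule UN_I[OF v(1)])
  qed
  have dWsym: "sym (d_W E W)"
  proof (rule symI)
    fix a b assume "(a, b) \<in> d_W E W"
    then obtain v where v: "v \<in> W" "(a, b) \<in> d_restr E v" unfolding d_W_def by (rule UN_E)
    then have "(b, a) \<in> d_restr E v" unfolding d_restr_def using v(2) by (simp add: dv_star_sym)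
    then show "(b, a) \<in> d_W E W" unfolding d_W_def by (rule UN_I[OF v(1)])
  qed
  have rsub: "r \<subseteq> A \<times> A" unfolding r_def d_W_star_def by (rule trancl_subset_Sigma[OF dWsub])
  have rrefl: "refl_on A r" unfolding refl_on_def r_def d_W_star_def using dWrefl by (simp add: r_into_trancl')
  have rsym: "sym r" unfolding r_def d_W_star_def using sym_trancl[OF dWsym] .
  have rtr: "trans r" unfolding r_def d_W_star_def by (rule trans_trancl)
  have eq: "equiv A r" using rsub rrefl rsym rtr by (rule equivI)
  have dW_r: "\<And>a b v. v \<in> W \<Longrightarrow> (a, b) \<in> d_restr E v \<Longrightarrow> (a, b) \<in> r"
  proof -
    fix a b v assume "v \<in> W" "(a, b) \<in> d_restr E v"
    then have "(a, b) \<in> d_W E W" unfolding d_W_def by (rule UN_I)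
    then show "(a, b) \<in> r" unfolding r_def d_W_star_def by (rule r_into_trancl)
  qed
  have P1: "\<forall>\<phi> \<in> A // r. \<forall>x\<in>W. \<exists>y. {x, y} \<in> \<phi> \<and> {x, y} \<in> A"
  proof (intro ballI)
    fix \<phi> x assume phi: "\<phi> \<in> A // r" and xW: "x \<in> W"
    then obtain g where g: "g \<in> A" "\<phi> = r `` {g}" by (auto elim: quotientE)
    then obtain v where v: "v \<in> W" "g \<in> S_edges E v" unfolding A_def by blast
    obtain y0 where y0: "{v, y0} \<in> S_edges E v" "(g, {v, y0}) \<in> d_restr E v"
      using base_step[OF sg v(2)] by blast
    have "(v, x) \<in> {(x, y). x \<in> W \<and> y \<in> W \<and> {x, y} \<in> E}\<^sup>*"
      using assms(4) v(1) xW unfolding induced_connected_def by blast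
    then show "\<exists>y. {x, y} \<in> \<phi> \<and> {x, y} \<in> A"
    proof (induction rule: rtrancl_induct)
      case base
      have "(g, {v, y0}) \<in> r" using dW_r[OF v(1) y0(2)] .
      then show ?case using g(2) y0(1) v(1) unfolding A_def by blast
    next
      case (step a z)
      then obtain y where y: "{a, y} \<in> \<phi>" "{a, y} \<in> A" by blast
      have aW: "a \<in> W" "z \<in> W" "{a, z} \<in> E" using step(2) by auto
      show ?case
      proof (cases "y = z")
        case True
        then show ?thesis using y by (auto simp: insert_commute)
      next
        case False
        obtain y' where y': "{z, y'} \<in> S_edges E a" "({a, y}, {z, y'}) \<in> d_restr E a"
          using move_step[OF sg _ aW(3) False] y(2) AE by blast
        have "(g, {a, y}) \<in> r" using y(1) g(2) by auto
        moreover have "({a, y}, {z, y'}) \<in> r" using dW_r[OF aW(1) y'(2)] .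
        ultimately have "(g, {z, y'}) \<in> r" by (rule transD[OF rtr])
        then show ?thesis using g(2) y'(1) aW(1) unfolding A_def by blast
      qed
    qed
  qed
  have P2: "card (A // r) \<le> \<Delta>"
  proof (cases "W = {}")
    case True
    then show ?thesis unfolding A_def by simp
  next
    case False
    then obtain x0 where x0: "x0 \<in> W" by blast
    have sub: "A // r \<subseteq> (\<lambda>h. r `` {h}) ` inc_edges E x0"
    proof
      fix \<phi> assume phi: "\<phi> \<in> A // r"
      then obtain y where y: "{x0, y} \<in> \<phi>" "{x0, y} \<in> A" using P1 x0 by blast
      obtain g where g: "g \<in> A" "\<phi> = r `` {g}" using phi by (auto elim: quotientE)
      have "(g, {x0, y}) \<in> r" using y g by auto
      then have "\<phi> = r `` {{x0, y}}" using g(2) equiv_class_eq[OF eq] by blast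
      moreover have "{x0, y} \<in> inc_edges E x0" using y(2) AE unfolding inc_edges_def by auto
      ultimately show "\<phi> \<in> (\<lambda>h. r `` {h}) ` inc_edges E x0" by blast
    qed
    have fi: "finite (inc_edges E x0)" using finE unfolding inc_edges_def by auto
    have "card (A // r) \<le> card ((\<lambda>h. r `` {h}) ` inc_edges E x0)"
      using card_mono[OF finite_imageI[OF fi] sub] .
    also have "\<dots> \<le> card (inc_edges E x0)" using card_image_le[OF fi] .
    also have "\<dots> = degree E x0" unfolding degree_def ..
    also have "\<dots> \<le> \<Delta>"
    proof -
      have "x0 \<in> V" using x0 assms(3) by blast
      then show ?thesis using assms(2) finV unfolding max_degree_def by auto
    qed
    finally show ?thesis .
  qed
  show ?thesis using P1 P2 by (simp only: A_def r_def)
qed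

end
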